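(* Let $F$ be a strictly increasing toxicity-rate function with values in $[0,1]$, let $d_1<\dots<d_m$ be fixed dose levels, and let $p\in(0,1/2)$ be the target rate. Suppose that for some index $u^*\ge 2$ we have $F(d_{u^*})=p$ (so $d_{u^*}$ is the MTD) and $F(d_{u^*-1})<p$. Consider the point design defined in the context, using cohorts of size $k\ge1$, started at a dose below $d_{u^*}$, with toxicity responses independent $\mathrm{Bernoulli}(F(x))$ at the assigned dose $x$. Then with positive probability the dose allocations do not converge to $d_{u^*}$.
   Context: Point design: cohorts of $k$ subjects are treated successively, the first at a chosen starting dose. For each level $d_u$ with observations, $\hat F(d_u)$ is the observed toxicity frequency at $d_u$ (possibly monotonized across levels by isotonic regression). After each cohort, the next cohort is allocated to the level whose $\hat F(d_u)$ is closest to $p$; except that if the highest dose $d_u$ for which an estimate is available has $\hat F(d_u)<p$, the design escalates to $d_{u+1}$ (boundary permitting), and if the lowest dose $d_u$ with an estimate has $\hat F(d_u)>p$, it de-escalates to $d_{u-1}$ (boundary permitting). Convergence to $d_{u^*}$ means that from some cohort on, all cohorts are allocated to $d_{u^*}$. *)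

theory Defs
  imports "HOL-Probability.Probability"
begin

text \<open>Dose levels are indexed 1..m.  A design state after some cohorts consists of
  N u = number of subjects treated at level u, T u = number of toxicities at level u,
  and the level to which the next cohort is allocated.\<close>

type_synonym design_state = "(nat \<Rightarrow> nat) \<times> (nat \<Rightarrow> nat) \<times> nat"

definition observed :: "nat \<Rightarrow> (nat \<Rightarrow> nat) \<Rightarrow> nat set" where
  "observed m N = {u \<in> {1..m}. 0 < N u}"

text \<open>Observed toxicity frequency at level u (raw, not monotonized).\<close>
definition est :: "(nat \<Rightarrow> nat) \<Rightarrow> (nat \<Rightarrow> nat) \<Rightarrow> nat \<Rightarrow> real" where
  "est N T u = real (T u) / real (N u)"

definition closest :: "nat \<Rightarrow> real \<Rightarrow> (nat \<Rightarrow> nat) \<Rightarrow> (nat \<Rightarrow> nat) \<Rightarrow> nat set" where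
  "closest m p N T = {u \<in> observed m N.
      \<forall>v \<in> observed m N. \<bar>est N T u - p\<bar> \<le> \<bar>est N T v - p\<bar>}"

text \<open>Allocation rule of the point design; ties among closest levels are broken by an
  arbitrary tie-breaking function tb.\<close>
definition next_level ::
  "nat \<Rightarrow> real \<Rightarrow> ((nat \<Rightarrow> nat) \<Rightarrow> (nat \<Rightarrow> nat) \<Rightarrow> nat set \<Rightarrow> nat)
   \<Rightarrow> (nat \<Rightarrow> nat) \<Rightarrow> (nat \<Rightarrow> nat) \<Rightarrow> nat" where
  "next_level m p tb N T =
     (let hi = Max (observed m N); lo = Min (observed m N) in
      if est N T hi < p \<and> hi < m then hi + 1
      else if est N T lo > p \<and> 1 < lo then lo - 1
      else tb N T (closest m p N T))"

text \<open>Outcome randomness: omega (u, j) is the toxicity indicator of the j-th subject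
  ever treated at level u; these are independent Bernoulli(F(d u)).\<close>
definition tox_space :: "(real \<Rightarrow> real) \<Rightarrow> (nat \<Rightarrow> real) \<Rightarrow> (nat \<times> nat \<Rightarrow> bool) measure" where
  "tox_space F d = PiM UNIV (\<lambda>uj. measure_pmf (bernoulli_pmf (F (d (fst uj)))))"

definition cohort_step ::
  "nat \<Rightarrow> real \<Rightarrow> nat \<Rightarrow> ((nat \<Rightarrow> nat) \<Rightarrow> (nat \<Rightarrow> nat) \<Rightarrow> nat set \<Rightarrow> nat)
   \<Rightarrow> (nat \<times> nat \<Rightarrow> bool) \<Rightarrow> design_state \<Rightarrow> design_state" where
  "cohort_step m p k tb \<omega> st =
     (case st of (N, T, x) \<Rightarrow>
       (let N' = N(x := N x + k);
            T' = T(x := T x + card {i. i < k \<and> \<omega> (x, N x + i)})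
        in (N', T', next_level m p tb N' T')))"

primrec design ::
  "nat \<Rightarrow> real \<Rightarrow> nat \<Rightarrow> ((nat \<Rightarrow> nat) \<Rightarrow> (nat \<Rightarrow> nat) \<Rightarrow> nat set \<Rightarrow> nat) \<Rightarrow> nat
   \<Rightarrow> (nat \<times> nat \<Rightarrow> bool) \<Rightarrow> nat \<Rightarrow> design_state" where
  "design m p k tb s \<omega> 0 = ((\<lambda>_. 0), (\<lambda>_. 0), s)"
| "design m p k tb s \<omega> (Suc n) = cohort_step m p k tb \<omega> (design m p k tb s \<omega> n)"

text \<open>Level allocated to cohort n (cohort 0 gets the starting level s).\<close>
definition alloc ::
  "nat \<Rightarrow> real \<Rightarrow> nat \<Rightarrow> ((nat \<Rightarrow> nat) \<Rightarrow> (nat \<Rightarrow> nat) \<Rightarrow> nat set \<Rightarrow> nat) \<Rightarrow> nat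
   \<Rightarrow> (nat \<times> nat \<Rightarrow> bool) \<Rightarrow> nat \<Rightarrow> nat" where
  "alloc m p k tb s \<omega> n = snd (snd (design m p k tb s \<omega> n))"

definition converges_to :: "(nat \<Rightarrow> nat) \<Rightarrow> nat \<Rightarrow> bool" where
  "converges_to a u \<longleftrightarrow> (\<exists>n0. \<forall>n\<ge>n0. a n = u)"

end

theory Submission imports Defs begin

lemma observed_finite: "finite (observed m N)"
  unfolding observed_def by auto

lemma closest_ne:
  assumes "observed m N \<noteq> {}"
  shows "closest m p N T \<noteq> {}"
proof -
  define f where "f u = \<bar>est N T u - p\<bar>" for u
  have fin: "finite (f ` observed m N)" using observed_finite by auto
  have "Min (f ` observed m N) \<in> f ` observed m N" using fin assms by (intro Min_in) auto
  then obtain u where u: "u \<in> observed m N" "f u = Min (f ` observed m N)" by auto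
  have "\<forall>v \<in> observed m N. f u \<le> f v" using u fin by auto
  then have "u \<in> closest m p N T" using u unfolding closest_def f_def by auto
  then show ?thesis by auto
qed

lemma closest_sub: "closest m p N T \<subseteq> observed m N"
  unfolding closest_def by auto

lemma next_level_range:
  assumes tb: "\<And>N T A. finite A \<Longrightarrow> A \<noteq> {} \<Longrightarrow> tb N T A \<in> A"
    and x: "x \<in> {1..m}" "0 < N x"
  shows "next_level m p tb N T \<in> {1..m}"
proof -
  have ne: "observed m N \<noteq> {}" using x unfolding observed_def by auto
  have obs: "observed m N \<subseteq> {1..m}" unfolding observed_def by auto
  have hi: "Max (observed m N) \<in> {1..m}" using Max_in[OF observed_finite ne] obs by auto
  have lo: "Min (observed m N) \<in> {1..m}" using Min_in[OF observed_finite ne] obs by auto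
  have cl: "tb N T (closest m p N T) \<in> {1..m}"
    using tb[OF finite_subset[OF closest_sub observed_finite] closest_ne[OF ne]] closest_sub obs by blast
  show ?thesis unfolding next_level_def Let_def using hi lo cl by auto
qed

lemma card_tox_le: "card {i. i < k \<and> P i} \<le> k"
proof -
  have "card {i. i < k \<and> P i} \<le> card {..<k}" by (intro card_mono) auto
  then show ?thesis by simp
qed

lemma design_inv:
  assumes tb: "\<And>N T A. finite A \<Longrightarrow> A \<noteq> {} \<Longrightarrow> tb N T A \<in> A"
    and s: "1 \<le> s" "s \<le> m" and k: "1 \<le> k"
  shows "(\<forall>u. fst (design m p k tb s \<omega> n) u \<le> n * k) \<and> snd (snd (design m p k tb s \<omega> n)) \<in> {1..m}"
proof (induction n)
  case 0
  then show ?case using s by simp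
next
  case (Suc n)
  obtain N T x where st: "design m p k tb s \<omega> n = (N, T, x)" by (cases "design m p k tb s \<omega> n") auto
  from Suc st have N: "\<forall>u. N u \<le> n * k" and x: "x \<in> {1..m}" by auto
  have "next_level m p tb (N(x := N x + k)) (T(x := T x + card {i. i < k \<and> \<omega> (x, N x + i)})) \<in> {1..m}"
    by (rule next_level_range[OF tb x]) (use k in auto)
  moreover have "\<forall>u. (N(x := N x + k)) u \<le> Suc n * k" using N by (simp add: trans_le_add2)
  ultimately show ?case using st by (simp add: cohort_step_def Let_def)
qed

lemma design_dep:
  assumes tb: "\<And>N T A. finite A \<Longrightarrow> A \<noteq> {} \<Longrightarrow> tb N T A \<in> A"
    and s: "1 \<le> s" "s \<le> m" and k: "1 \<le> k"
  shows "(\<forall>u\<le>m. \<forall>j<n*k. \<omega> (u,j) = \<omega>' (u,j)) \<Longrightarrow> design m p k tb s \<omega> n = design m p k tb s \<omega>' n"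
proof (induction n)
  case 0
  then show ?case by simp
next
  case (Suc n)
  have IH: "design m p k tb s \<omega> n = design m p k tb s \<omega>' n"
    using Suc by (intro Suc.IH) auto
  obtain N T x where st: "design m p k tb s \<omega> n = (N, T, x)" by (cases "design m p k tb s \<omega> n") auto
  from design_inv[where tb=tb and s=s and m=m and k=k and p=p and \<omega>=\<omega> and n=n, OF tb s k] st have N: "\<forall>u. N u \<le> n * k" and x: "x \<in> {1..m}" by auto
  have "{i. i < k \<and> \<omega> (x, N x + i)} = {i. i < k \<and> \<omega>' (x, N x + i)}"
  proof -
    have "\<omega> (x, N x + i) = \<omega>' (x, N x + i)" if "i < k" for i
    proof -
      have "N x + i < Suc n * k" using N[rule_format, of x] that by simp
      then show ?thesis using Suc.prems x by auto
    qed
    then show ?thesis by auto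
  qed
  then show ?case using st IH by (simp add: cohort_step_def Let_def)
qed

lemma next_not_ustar:
  assumes tb: "\<And>N T A. finite A \<Longrightarrow> A \<noteq> {} \<Longrightarrow> tb N T A \<in> A"
    and us: "ustar \<in> {1..m}" "0 < N ustar" "T ustar = N ustar"
    and w: "w \<in> observed m N" "T w < N w"
    and p: "0 < p" "p < 1/2"
  shows "next_level m p tb N T \<noteq> ustar"
proof -
  have uo: "ustar \<in> observed m N" using us unfolding observed_def by auto
  have ne: "observed m N \<noteq> {}" using uo by auto
  have hi: "ustar \<le> Max (observed m N)" using Max_ge[OF observed_finite uo] .
  have lo: "Min (observed m N) \<le> ustar" using Min_le[OF observed_finite uo] .
  have eu: "est N T ustar = 1" using us unfolding est_def by simp
  have Nw: "0 < N w" using w unfolding observed_def by auto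
  have ew: "0 \<le> est N T w" "est N T w < 1" using w Nw unfolding est_def by (auto simp: divide_less_eq)
  have "\<bar>est N T w - p\<bar> < \<bar>est N T ustar - p\<bar>" using ew eu p by auto
  then have "ustar \<notin> closest m p N T" using w unfolding closest_def by force
  moreover have "tb N T (closest m p N T) \<in> closest m p N T"
    using tb[OF finite_subset[OF closest_sub observed_finite] closest_ne[OF ne]] .
  ultimately have "tb N T (closest m p N T) \<noteq> ustar" by auto
  then show ?thesis unfolding next_level_def Let_def using hi lo by auto
qed

lemma trap_step:
  assumes tb: "\<And>N T A. finite A \<Longrightarrow> A \<noteq> {} \<Longrightarrow> tb N T A \<in> A"
    and us: "ustar \<in> {1..m}" "0 < N ustar" "T ustar = N ustar"
    and w: "w \<in> observed m N" "T w < N w"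
    and x: "x \<noteq> ustar"
    and p: "0 < p" "p < 1/2"
    and st: "cohort_step m p k tb \<omega> (N, T, x) = (N', T', x')"
  shows "0 < N' ustar \<and> T' ustar = N' ustar \<and> w \<in> observed m N' \<and> T' w < N' w \<and> x' \<noteq> ustar"
proof -
  have N': "N' = N(x := N x + k)" and T': "T' = T(x := T x + card {i. i < k \<and> \<omega> (x, N x + i)})"
    and x': "x' = next_level m p tb N' T'"
    using st by (auto simp: cohort_step_def Let_def)
  have c: "card {i. i < k \<and> \<omega> (x, N x + i)} \<le> k" by (rule card_tox_le)
  have a: "0 < N' ustar" "T' ustar = N' ustar" using us x N' T' by auto
  have b: "w \<in> observed m N'" using w N' unfolding observed_def by auto
  have d: "T' w < N' w" using w N' T' c by auto
  have "x' \<noteq> ustar" unfolding x' by (rule next_not_ustar[OF tb us(1) a b d p])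
  then show ?thesis using a b d by auto
qed

lemma trap_forever:
  assumes tb: "\<And>N T A. finite A \<Longrightarrow> A \<noteq> {} \<Longrightarrow> tb N T A \<in> A"
    and us: "ustar \<in> {1..m}"
    and p: "0 < p" "p < 1/2"
    and st0: "design m p k tb s \<omega> n0 = (N, T, x)"
    and h: "0 < N ustar" "T ustar = N ustar" "w \<in> observed m N" "T w < N w" "x \<noteq> ustar"
  shows "case design m p k tb s \<omega> (n0 + j) of (N, T, x) \<Rightarrow>
          0 < N ustar \<and> T ustar = N ustar \<and> w \<in> observed m N \<and> T w < N w \<and> x \<noteq> ustar"
proof (induction j)
  case 0
  then show ?case using st0 h by simp
next
  case (Suc j)
  obtain N1 T1 x1 where e: "design m p k tb s \<omega> (n0 + j) = (N1, T1, x1)"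
    by (cases "design m p k tb s \<omega> (n0 + j)") auto
  obtain N2 T2 x2 where e2: "cohort_step m p k tb \<omega> (N1, T1, x1) = (N2, T2, x2)"
    by (cases "cohort_step m p k tb \<omega> (N1, T1, x1)") auto
  from Suc e have i: "0 < N1 ustar" "T1 ustar = N1 ustar" "w \<in> observed m N1" "T1 w < N1 w" "x1 \<noteq> ustar" by auto
  have "0 < N2 ustar \<and> T2 ustar = N2 ustar \<and> w \<in> observed m N2 \<and> T2 w < N2 w \<and> x2 \<noteq> ustar"
    by (rule trap_step[OF tb us i(1,2,3,4,5) p e2])
  then show ?case using e e2 by simp
qed

lemma reach:
  assumes s: "1 \<le> s" "s < ustar" "ustar \<le> m" and p: "0 < p"
    and om: "\<And>u i. s \<le> u \<Longrightarrow> u < ustar \<Longrightarrow> i < k \<Longrightarrow> \<not> \<omega> (u, i)"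
    and k: "1 \<le> k"
  shows "j \<le> ustar - s \<Longrightarrow> design m p k tb s \<omega> j = ((\<lambda>u. if s \<le> u \<and> u < s + j then k else 0), (\<lambda>_. 0), s + j)"
proof (induction j)
  case 0
  then show ?case by (simp add: fun_eq_iff)
next
  case (Suc j)
  have IH: "design m p k tb s \<omega> j = ((\<lambda>u. if s \<le> u \<and> u < s + j then k else 0), (\<lambda>_. 0), s + j)"
    using Suc by auto
  define N' where "N' = (\<lambda>u. if s \<le> u \<and> u < s + Suc j then k else (0::nat))"
  have N'eq: "(\<lambda>u. if s \<le> u \<and> u < s + j then k else 0)(s + j := 0 + k) = N'"
    unfolding N'_def by (auto simp: fun_eq_iff)
  have c: "{i. i < k \<and> \<omega> (s + j, 0 + i)} = {}" using om Suc.prems by auto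
  have T'eq: "(\<lambda>_. 0::nat)(s + j := 0 + card {i. i < k \<and> \<omega> (s + j, 0 + i)}) = (\<lambda>_. 0)"
    using c by (auto simp: fun_eq_iff)
  have obs: "observed m N' = {s..s + j}" using Suc.prems s k unfolding observed_def N'_def by auto
  have hi: "Max (observed m N') = s + j" unfolding obs by (rule Max_eqI) auto
  have "est N' (\<lambda>_. 0) (s + j) = 0" by (simp add: est_def)
  moreover have "s + j < m" using Suc.prems s by auto
  ultimately have "next_level m p tb N' (\<lambda>_. 0) = s + Suc j"
    unfolding next_level_def Let_def hi using p by simp
  then show ?case using IH N'eq T'eq
    by (simp add: cohort_step_def Let_def N'_def)
qed

lemma reach_trap:
  assumes tb: "\<And>N T A. finite A \<Longrightarrow> A \<noteq> {} \<Longrightarrow> tb N T A \<in> A"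
    and s: "1 \<le> s" "s < ustar" "ustar \<le> m" and p: "0 < p" "p < 1/2"
    and om: "\<And>u i. s \<le> u \<Longrightarrow> u < ustar \<Longrightarrow> i < k \<Longrightarrow> \<not> \<omega> (u, i)"
    and om2: "\<And>i. i < k \<Longrightarrow> \<omega> (ustar, i)"
    and k: "1 \<le> k"
  shows "\<not> converges_to (alloc m p k tb s \<omega>) ustar"
proof -
  define j0 where "j0 = ustar - s"
  have D: "design m p k tb s \<omega> j0 = ((\<lambda>u. if s \<le> u \<and> u < s + j0 then k else 0), (\<lambda>_. 0), ustar)"
    using reach[where tb=tb and j=j0 and \<omega>=\<omega> and s=s and ustar=ustar and m=m and p=p and k=k, OF s p(1) om k] s unfolding j0_def by auto
  define N where "N = (\<lambda>u. if s \<le> u \<and> u < s + j0 then k else (0::nat))(ustar := k)"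
  define T where "T = (\<lambda>_. 0::nat)(ustar := k)"
  have N0: "(\<lambda>u. if s \<le> u \<and> u < s + j0 then k else 0) ustar = (0::nat)" unfolding j0_def using s by auto
  have c: "{i. i < k \<and> \<omega> (ustar, 0 + i)} = {..<k}" using om2 by auto
  have D1: "design m p k tb s \<omega> (Suc j0) = (N, T, next_level m p tb N T)"
    using D N0 c by (simp add: cohort_step_def Let_def N_def T_def)
  have us: "ustar \<in> {1..m}" using s by auto
  have h: "0 < N ustar" "T ustar = N ustar" using k by (auto simp: N_def T_def)
  have w: "s \<in> observed m N" "T s < N s" using s k unfolding observed_def N_def T_def j0_def by auto
  have x: "next_level m p tb N T \<noteq> ustar" by (rule next_not_ustar[OF tb us h w p])
  have "alloc m p k tb s \<omega> n \<noteq> ustar" if "n \<ge> Suc j0" for n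
  proof -
    obtain j where n: "n = Suc j0 + j" using \<open>n \<ge> Suc j0\<close> le_Suc_ex by blast
    have "case design m p k tb s \<omega> (Suc j0 + j) of (N, T, x) \<Rightarrow>
          0 < N ustar \<and> T ustar = N ustar \<and> s \<in> observed m N \<and> T s < N s \<and> x \<noteq> ustar"
      by (rule trap_forever[OF tb us p D1 h w x])
    then show ?thesis unfolding alloc_def n by (auto split: prod.splits)
  qed
  then show ?thesis unfolding converges_to_def
    by (metis le_cases)
qed

lemma tox_sets_coord:
  "{\<omega> \<in> space (tox_space F d). \<omega> j = b} \<in> sets (tox_space F d)"
  unfolding tox_space_def
  by (rule sets_Collect_single') auto

lemma finite_dep_measurable:
  fixes P :: "(nat \<times> nat \<Rightarrow> bool) \<Rightarrow> bool"
  assumes J: "finite J" and dep: "\<And>\<omega> \<omega>'. (\<forall>j\<in>J. \<omega> j = \<omega>' j) \<Longrightarrow> P \<omega> = P \<omega>'"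
  shows "{\<omega> \<in> space (tox_space F d). P \<omega>} \<in> sets (tox_space F d)"
proof -
  let ?M = "tox_space F d"
  define C where "C g = {\<omega> \<in> space ?M. \<forall>j\<in>J. \<omega> j = g j}" for g :: "nat \<times> nat \<Rightarrow> bool"
  have Cm: "C g \<in> sets ?M" for g
  proof -
    have "{\<omega> \<in> space ?M. \<forall>j\<in>J. \<omega> j = g j} \<in> sets ?M"
      by (rule sets.sets_Collect_finite_All[OF _ J]) (rule tox_sets_coord)
    then show ?thesis unfolding C_def .
  qed
  define R where "R = (\<lambda>\<omega>. restrict \<omega> J) ` {\<omega> \<in> space ?M. P \<omega>}"
  have Rf: "finite R"
  proof (rule finite_subset)
    show "R \<subseteq> PiE J (\<lambda>_. UNIV)" unfolding R_def by auto
    show "finite (PiE J (\<lambda>_. UNIV :: bool set))" using J by (intro finite_PiE) auto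
  qed
  have eq: "{\<omega> \<in> space ?M. P \<omega>} = (\<Union>g\<in>R. C g)"
  proof
    show "{\<omega> \<in> space ?M. P \<omega>} \<subseteq> (\<Union>g\<in>R. C g)"
    proof
      fix \<omega> assume a: "\<omega> \<in> {\<omega> \<in> space ?M. P \<omega>}"
      then have "restrict \<omega> J \<in> R" unfolding R_def by auto
      moreover have "\<omega> \<in> C (restrict \<omega> J)" using a unfolding C_def by auto
      ultimately show "\<omega> \<in> (\<Union>g\<in>R. C g)" by auto
    qed
    show "(\<Union>g\<in>R. C g) \<subseteq> {\<omega> \<in> space ?M. P \<omega>}"
    proof
      fix \<omega> assume "\<omega> \<in> (\<Union>g\<in>R. C g)"
      then obtain \<omega>0 where o0: "\<omega>0 \<in> space ?M" "P \<omega>0" and c: "\<omega> \<in> C (restrict \<omega>0 J)"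
        unfolding R_def by auto
      have "\<forall>j\<in>J. \<omega> j = \<omega>0 j" using c unfolding C_def by auto
      then have "P \<omega>" using dep o0 by blast
      then show "\<omega> \<in> {\<omega> \<in> space ?M. P \<omega>}" using c unfolding C_def by auto
    qed
  qed
  show ?thesis unfolding eq using Rf Cm by auto
qed

lemma Collect_not_diff: "{x\<in>A. \<not> P x} = A - {x\<in>A. P x}"
  by blast

theorem mainTheorem4:
  fixes F :: "real \<Rightarrow> real" and d :: "nat \<Rightarrow> real" and m k s ustar :: nat and p :: real
    and tb :: "(nat \<Rightarrow> nat) \<Rightarrow> (nat \<Rightarrow> nat) \<Rightarrow> nat set \<Rightarrow> nat"
  assumes F_mono: "strict_mono F"
    and F_range: "\<And>x. 0 \<le> F x \<and> F x \<le> 1"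
    and d_mono: "strict_mono_on {1..m} d"
    and p_pos: "0 < p" and p_half: "p < 1/2"
    and ustar_ge: "2 \<le> ustar" and ustar_le: "ustar \<le> m"
    and mtd: "F (d ustar) = p"
    and below: "F (d (ustar - 1)) < p"
    and k_pos: "1 \<le> k"
    and start: "1 \<le> s" "s < ustar"
    and tb: "\<And>N T A. finite A \<Longrightarrow> A \<noteq> {} \<Longrightarrow> tb N T A \<in> A"
  shows "measure (tox_space F d)
           {\<omega> \<in> space (tox_space F d). \<not> converges_to (alloc m p k tb s \<omega>) ustar} > 0"
proof -
  let ?Mi = "\<lambda>uj::nat\<times>nat. measure_pmf (bernoulli_pmf (F (d (fst uj))))"
  let ?M = "tox_space F d"
  interpret P: product_prob_space ?Mi UNIV
    by unfold_locales (simp add: prob_space_measure_pmf)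
  have Meq: "?M = PiM UNIV ?Mi" unfolding tox_space_def by simp
  have sm: "1 \<le> s" "s \<le> m" using start ustar_le by auto
  have am: "{\<omega> \<in> space ?M. alloc m p k tb s \<omega> n = ustar} \<in> sets ?M" for n
  proof (rule finite_dep_measurable)
    show "finite ({..m} \<times> {..<n*k})" by auto
    fix \<omega> \<omega>' :: "nat \<times> nat \<Rightarrow> bool"
    assume "\<forall>j\<in>{..m} \<times> {..<n*k}. \<omega> j = \<omega>' j"
    then have "design m p k tb s \<omega> n = design m p k tb s \<omega>' n"
      by (intro design_dep[OF tb sm k_pos]) auto
    then show "(alloc m p k tb s \<omega> n = ustar) = (alloc m p k tb s \<omega>' n = ustar)"
      unfolding alloc_def by simp
  qed
  have Sm: "{\<omega> \<in> space ?M. \<not> converges_to (alloc m p k tb s \<omega>) ustar} \<in> sets ?M"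
  proof -
    have a1: "{\<omega> \<in> space ?M. n0 \<le> n \<longrightarrow> alloc m p k tb s \<omega> n = ustar} \<in> sets ?M" for n0 n
      using am[of n] by (cases "n0 \<le> n") auto
    have a2: "{\<omega> \<in> space ?M. \<forall>n. n0 \<le> n \<longrightarrow> alloc m p k tb s \<omega> n = ustar} \<in> sets ?M" for n0
      by (rule sets.sets_Collect_countable_All) (rule a1)
    have a3: "{\<omega> \<in> space ?M. \<exists>n0. \<forall>n. n0 \<le> n \<longrightarrow> alloc m p k tb s \<omega> n = ustar} \<in> sets ?M"
      by (rule sets.sets_Collect_countable_Ex) (rule a2)
    have "{\<omega> \<in> space ?M. converges_to (alloc m p k tb s \<omega>) ustar} \<in> sets ?M"
      using a3 unfolding converges_to_def .
    then show ?thesis unfolding Collect_not_diff by (rule sets.Diff[OF sets.top])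
  qed
  define J where "J = ({s..<ustar} \<times> {..<k}) \<union> ({ustar} \<times> {..<k})"
  define X where "X j = {fst j = ustar}" for j :: "nat \<times> nat"
  define E where "E = {\<omega> \<in> space ?M. \<forall>j\<in>J. \<omega> j \<in> X j}"
  have Jf: "finite J" unfolding J_def by auto
  have EM: "emeasure ?M E = (\<Prod>j\<in>J. emeasure (?Mi j) (X j))"
    unfolding E_def Meq by (rule P.emeasure_PiM_Collect) (auto simp: Jf)
  have pos: "emeasure (?Mi j) (X j) \<noteq> 0" if "j \<in> J" for j
  proof (cases "fst j = ustar")
    case True
    then show ?thesis using p_pos p_half mtd F_range[of "d ustar"] unfolding X_def by (simp add: emeasure_pmf_single)
  next
    case False
    then have u: "s \<le> fst j" "fst j < ustar" using that unfolding J_def by auto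
    then have "d (fst j) < d ustar" using d_mono start ustar_le
      by (intro strict_mono_onD[OF d_mono]) auto
    then have "F (d (fst j)) < p" using F_mono mtd by (metis strict_monoD)
    then have "0 < 1 - F (d (fst j))" using p_half by simp
    then show ?thesis using False F_range[of "d (fst j)"] unfolding X_def by (simp add: emeasure_pmf_single)
  qed
  have "emeasure ?M E \<noteq> 0" unfolding EM using pos Jf by (simp add: prod_zero_iff)
  then have Epos: "measure ?M E > 0"
    unfolding Meq P.emeasure_eq_measure by (simp add: less_le measure_nonneg)
  have Esub: "E \<subseteq> {\<omega> \<in> space ?M. \<not> converges_to (alloc m p k tb s \<omega>) ustar}"
  proof
    fix \<omega> assume e: "\<omega> \<in> E"
    have om: "\<not> \<omega> (u, i)" if "s \<le> u" "u < ustar" "i < k" for u i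
      using e that unfolding E_def J_def X_def by auto
    have om2: "\<omega> (ustar, i)" if "i < k" for i
      using e that unfolding E_def J_def X_def by auto
    have "\<not> converges_to (alloc m p k tb s \<omega>) ustar"
      by (rule reach_trap[where tb=tb and m=m and p=p and k=k and s=s and \<omega>=\<omega> and ustar=ustar, OF tb start ustar_le p_pos p_half om om2 k_pos])
    then show "\<omega> \<in> {\<omega> \<in> space ?M. \<not> converges_to (alloc m p k tb s \<omega>) ustar}"
      using e unfolding E_def by auto
  qed
  have "measure ?M E \<le> measure ?M {\<omega> \<in> space ?M. \<not> converges_to (alloc m p k tb s \<omega>) ustar}"
    using Esub Sm unfolding Meq by (intro P.finite_measure_mono) auto
  then show ?thesis using Epos by linarith
qed

end
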